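(* Let $n \geq 5$ and let $\Delta$ be a triangulation of the punctured $n$-gon $\mathcal{P}_n$ with $\Delta \notin \{S_n, S_n^{-1}\}$. Then $\Delta$ contains a diagonal which is close to the border.
   Context: $\mathcal{P}_n$ is a regular $n$-gon with one puncture in its center. For border vertices $a \neq b$, let $\delta_{a,b}$ be the counterclockwise path along the border from $a$ to $b$, and $\delta_{a,a}$ the path going once around the border from $a$ to $a$; $|\delta_{a,b}|$ is the number of border vertices on $\delta_{a,b}$, including $a$ and $b$. An edge is a homotopy class of non-self-crossing paths from $a$ to $b$ in the interior of $\mathcal{P}_n$ homotopic to $\delta_{a,b}$, with $|\delta_{a,b}|\ge 3$. A diagonal (tagged edge) is a pair $(M,\epsilon)$ with $M$ an edge from $a$ to $b$ and $\epsilon\in\{1,-1\}$, where $\epsilon=1$ is forced when $a\neq b$. Edges with $a=b$ are drawn as arcs from the puncture to the border vertex $a$ ("diagonals between the puncture and the border"); those with $\epsilon=-1$ are called tagged. The crossing number of two diagonals is the minimal number of interior intersection points of representatives, except that for two diagonals between the puncture and vertices $a$, $c$ with tags $\epsilon,\epsilon'$ it is $1$ if $a\neq c$ and $\epsilon\neq\epsilon'$, and $0$ otherwise. A triangulation is a maximal set of pairwise non-crossing diagonals (it has $n$ elements). A diagonal from $a$ to $b$ with $a \ne b$ is close to the border if $|\delta_{a,b}|=3$. $S_n$ denotes the triangulation consisting of the $n$ untagged diagonals from the puncture to each of the $n$ border vertices, and $S_n^{-1}$ the one obtained by inverting all tags (the $n$ tagged diagonals from the puncture). *)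

theory Defs
  imports Main
begin

text \<open>Combinatorial model of tagged diagonals of the once-punctured n-gon.
Border vertices are 0,...,n-1 in counterclockwise order.
Arc a b (a \<noteq> b): the edge from a to b homotopic to the counterclockwise
border path delta_{a,b}.  Punc a t: the diagonal between the puncture and the
border vertex a; t = True means tagged (epsilon = -1).\<close>

datatype diag = Arc nat nat | Punc nat bool

text \<open>Number of border segments on delta_{a,b}; |delta_{a,b}| = ccw_len n a b + 1.\<close>
definition ccw_len :: "nat \<Rightarrow> nat \<Rightarrow> nat \<Rightarrow> nat" where
  "ccw_len n a b = (b + n - a) mod n"

text \<open>Border segments on delta_{a,b}; segment i joins vertex i and vertex (i+1) mod n.\<close>
definition segs :: "nat \<Rightarrow> nat \<Rightarrow> nat \<Rightarrow> nat set" where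
  "segs n a b = {(a + i) mod n | i. i < ccw_len n a b}"

definition inner :: "nat \<Rightarrow> nat \<Rightarrow> nat \<Rightarrow> nat set" where
  "inner n a b = {(a + i) mod n | i. 0 < i \<and> i < ccw_len n a b}"

fun is_diag :: "nat \<Rightarrow> diag \<Rightarrow> bool" where
  "is_diag n (Arc a b) = (a < n \<and> b < n \<and> a \<noteq> b \<and> ccw_len n a b + 1 \<ge> 3)"
| "is_diag n (Punc a t) = (a < n)"

text \<open>crosses n d e: the crossing number of d and e is nonzero.\<close>
fun crosses :: "nat \<Rightarrow> diag \<Rightarrow> diag \<Rightarrow> bool" where
  "crosses n (Arc a b) (Arc c d) =
     (\<not> (segs n a b \<subseteq> segs n c d \<or> segs n c d \<subseteq> segs n a b
          \<or> segs n a b \<inter> segs n c d = {}))"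
| "crosses n (Arc a b) (Punc c t) = (c \<in> inner n a b)"
| "crosses n (Punc c t) (Arc a b) = (c \<in> inner n a b)"
| "crosses n (Punc a t) (Punc c s) = (a \<noteq> c \<and> t \<noteq> s)"

definition triangulation :: "nat \<Rightarrow> diag set \<Rightarrow> bool" where
  "triangulation n T \<longleftrightarrow>
     (\<forall>d\<in>T. is_diag n d)
   \<and> (\<forall>d\<in>T. \<forall>e\<in>T. \<not> crosses n d e)
   \<and> (\<forall>d. is_diag n d \<and> d \<notin> T \<longrightarrow> (\<exists>e\<in>T. crosses n d e))"

definition S :: "nat \<Rightarrow> diag set" where
  "S n = {Punc a False | a. a < n}"

definition S_inv :: "nat \<Rightarrow> diag set" where
  "S_inv n = {Punc a True | a. a < n}"

definition close_to_border :: "nat \<Rightarrow> diag \<Rightarrow> bool" where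
  "close_to_border n d \<longleftrightarrow> (\<exists>a b. d = Arc a b \<and> a \<noteq> b \<and> ccw_len n a b + 1 = 3)"

end

theory Submission
  imports Defs
begin

lemma len2: "a < n \<Longrightarrow> 3 \<le> n \<Longrightarrow> ccw_len n a ((a+2) mod n) = 2"
  unfolding ccw_len_def
  by (cases "a + 2 < n") (auto simp: mod_if)
lemma lt2: "(i::nat) < 2 \<longleftrightarrow> i = 0 \<or> i = 1" by auto
lemma segs_E: assumes "a < n" "3 \<le> n" shows "segs n a ((a+2) mod n) = {a, (a+1) mod n}"
proof -
  have "segs n a ((a+2) mod n) = {(a + i) mod n |i. i = 0 \<or> i = 1}"
    unfolding segs_def len2[OF assms] lt2 by simp
  also have "\<dots> = {a, (a+1) mod n}"
  proof (intro equalityI subsetI)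
    fix x assume "x \<in> {(a + i) mod n |i. i = 0 \<or> i = 1}"
    then show "x \<in> {a, (a+1) mod n}" using assms by auto
  next
    fix x assume "x \<in> {a, (a+1) mod n}"
    then consider "x = (a+0) mod n" | "x = (a+1) mod n" using assms by auto
    then show "x \<in> {(a + i) mod n |i. i = 0 \<or> i = 1}" by cases blast+
  qed
  finally show ?thesis .
qed
lemma inner_E: assumes "a < n" "3 \<le> n" shows "inner n a ((a+2) mod n) = {(a+1) mod n}"
proof -
  have "inner n a ((a+2) mod n) = {(a + i) mod n |i. i = 1}"
    proof -
    have e: "\<And>i::nat. (0 < i \<and> i < 2) = (i = 1)" by auto
    show ?thesis unfolding inner_def len2[OF assms] e by simp
  qed
  also have "\<dots> = {(a+1) mod n}" by auto
  finally show ?thesis .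
qed

lemma len_lt: "0 < n \<Longrightarrow> ccw_len n a b < n"
  unfolding ccw_len_def by simp

lemma segs_a: "a < n \<Longrightarrow> 0 < ccw_len n a b \<Longrightarrow> a \<in> segs n a b"
  unfolding segs_def by (rule CollectI, rule exI[of _ 0]) simp

lemma segs_a1: "1 < ccw_len n a b \<Longrightarrow> (a+1) mod n \<in> segs n a b"
  unfolding segs_def by blast

lemma inner_a1: "1 < ccw_len n a b \<Longrightarrow> (a+1) mod n \<in> inner n a b"
  unfolding inner_def by blast

lemma segs_img: "segs n c d = (\<lambda>i. (c+i) mod n) ` {..<ccw_len n c d}"
  unfolding segs_def by auto

lemma modinj: assumes "(c+i) mod n = (c+j) mod (n::nat)" "i < j" "j < n" shows False
proof -
  have "n dvd (c+j) - (c+i)" using assms mod_eq_dvd_iff_nat[of "c+i" "c+j" n] by simp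
  then have "n dvd j - i" by simp
  moreover have "0 < j - i" "j - i < n" using assms by auto
  ultimately show False using dvd_imp_le by fastforce
qed

lemma card_segs: assumes "0 < n" shows "card (segs n c d) = ccw_len n c d"
proof -
  have "inj_on (\<lambda>i. (c+i) mod n) {..<ccw_len n c d}"
  proof (rule inj_onI)
    fix i j assume i: "i \<in> {..<ccw_len n c d}" and j: "j \<in> {..<ccw_len n c d}"
      and eq: "(c+i) mod n = (c+j) mod n"
    have ilt: "i < n" and jlt: "j < n" using i j len_lt[OF assms, of c d] by auto
    show "i = j"
    proof (rule ccontr)
      assume "i \<noteq> j"
      then consider "i < j" | "j < i" by linarith
      then show False
      proof cases
        case 1 then show False using modinj[OF eq 1 jlt] by simp
      next
        case 2 then show False using modinj[OF eq[symmetric] 2 ilt] by simp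
      qed
    qed
  qed
  then show ?thesis unfolding segs_img by (simp add: card_image)
qed

lemma a1lem: "v < n \<Longrightarrow> 3 \<le> (n::nat) \<Longrightarrow> ((v + n - 1) mod n + 1) mod n = v"
  by (cases v) (auto simp: mod_Suc_eq  mod_if)

theorem lemma5p1:
  fixes n :: nat and \<Delta> :: "diag set"
  assumes "n \<ge> 5" and "triangulation n \<Delta>"
    and "\<Delta> \<noteq> S n" and "\<Delta> \<noteq> S_inv n"
  shows "\<exists>d\<in>\<Delta>. close_to_border n d"
proof (rule ccontr)
  assume H: "\<not> (\<exists>d\<in>\<Delta>. close_to_border n d)"
  have D: "\<And>d. d \<in> \<Delta> \<Longrightarrow> is_diag n d"
    and NC: "\<And>d e. d \<in> \<Delta> \<Longrightarrow> e \<in> \<Delta> \<Longrightarrow> \<not> crosses n d e"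
    and MX: "\<And>d. is_diag n d \<Longrightarrow> d \<notin> \<Delta> \<Longrightarrow> \<exists>e\<in>\<Delta>. crosses n d e"
    using assms(2) unfolding triangulation_def by blast+
  have n3: "3 \<le> n" using assms(1) by simp
  have Ediag: "is_diag n (Arc a ((a+2) mod n))" if "a < n" for a
  proof -
    have "a \<noteq> (a+2) mod n"
    proof
      assume "a = (a+2) mod n"
      then have "ccw_len n a ((a+2) mod n) = 0" by (simp add: ccw_len_def)
      then show False using len2[OF that n3] by simp
    qed
    then show ?thesis using that n3 len2[OF that n3] by simp
  qed
  have Eclose: "close_to_border n (Arc a ((a+2) mod n))" if "a < n" for a
    unfolding close_to_border_def using len2[OF that n3] Ediag[OF that] by auto
  have Enot: "Arc a ((a+2) mod n) \<notin> \<Delta>" if "a < n" for a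
    using H Eclose[OF that] by blast
  show False
  proof (cases "\<exists>a b. Arc a b \<in> \<Delta>")
    case True
    define P where "P m = (\<exists>a b. Arc a b \<in> \<Delta> \<and> ccw_len n a b = m)" for m
    have "\<exists>m. P m" using True P_def by blast
    then have PL: "P (LEAST m. P m)" by (rule LeastI_ex)
    define k where "k = (LEAST m. P m)"
    obtain a b where ab: "Arc a b \<in> \<Delta>" "ccw_len n a b = k" using PL P_def k_def by blast
    have kmin: "\<And>c d. Arc c d \<in> \<Delta> \<Longrightarrow> k \<le> ccw_len n c d"
      unfolding k_def by (rule Least_le) (auto simp: P_def)
    have dab: "a < n" "b < n" "a \<noteq> b" "2 \<le> k" using D[OF ab(1)] ab(2) by auto
    have "k \<noteq> 2"
    proof
      assume "k = 2"
      then have "close_to_border n (Arc a b)" unfolding close_to_border_def using ab dab by auto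
      then show False using H ab by blast
    qed
    then have k3: "3 \<le> k" using dab by simp
    let ?E = "Arc a ((a+2) mod n)"
    obtain e where e: "e \<in> \<Delta>" "crosses n ?E e" using MX[OF Ediag[OF dab(1)] Enot[OF dab(1)]] by blast
    show False
    proof (cases e)
      case (Punc c t)
      then have "c = (a+1) mod n" using e(2) inner_E[OF dab(1) n3] by simp
      then have "crosses n (Arc a b) e" using Punc inner_a1[of n a b] ab(2) k3 by simp
      then show False using NC[OF ab(1) e(1)] by simp
    next
      case (Arc c d)
      let ?S1 = "segs n c d" and ?T = "segs n a b"
      have aT: "a \<in> ?T" using segs_a[OF dab(1)] ab(2) k3 by simp
      have a1T: "(a+1) mod n \<in> ?T" using segs_a1[of n a b] ab(2) k3 by simp
      have cr: "\<not> (?S1 \<subseteq> {a, (a+1) mod n} \<or> {a, (a+1) mod n} \<subseteq> ?S1 \<or> ?S1 \<inter> {a, (a+1) mod n} = {})"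
        using e(2) Arc segs_E[OF dab(1) n3] by auto
      have nc: "?T \<subseteq> ?S1 \<or> ?S1 \<subseteq> ?T \<or> ?T \<inter> ?S1 = {}"
        using NC[OF ab(1) e(1)] Arc by auto
      have kl: "k \<le> ccw_len n c d" using kmin e(1) Arc by simp
      have fin: "finite ?T" unfolding segs_img by simp
      show False
      proof -
        { assume sub: "?S1 \<subseteq> ?T"
          have "card ?S1 = card ?T" using card_segs[of n c d] card_segs[of n a b] n3 ab(2) kl
              card_mono[OF fin sub] by simp
          then have "?S1 = ?T" using card_subset_eq[OF fin sub] by simp
          then have False using cr aT a1T by auto }
        then show False using nc cr aT a1T by blast
      qed
    qed
  next
    case False
    have allP: "\<exists>t. Punc v t \<in> \<Delta>" if "v < n" for v
    proof -
      define a where "a = (v + n - 1) mod n"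
      have an: "a < n" using n3 a_def by simp
      have a1: "(a+1) mod n = v" using a1lem[OF that n3] unfolding a_def .
      obtain e where e: "e \<in> \<Delta>" "crosses n (Arc a ((a+2) mod n)) e"
        using MX[OF Ediag[OF an] Enot[OF an]] by blast
      then obtain c t where "e = Punc c t" using False by (cases e) auto
      then show ?thesis using e inner_E[OF an n3] a1 by auto
    qed
    obtain t0 where t0: "Punc 0 t0 \<in> \<Delta>" using allP n3 by fastforce
    obtain u1 where u1: "Punc 1 u1 \<in> \<Delta>" using allP n3 by fastforce
    have u1t: "u1 = t0" using NC[OF u1 t0] by auto
    have eq: "\<Delta> = {Punc c t0 | c. c < n}"
    proof
      show "\<Delta> \<subseteq> {Punc c t0 | c. c < n}"
      proof
        fix e assume e: "e \<in> \<Delta>"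
        then obtain c s where cs: "e = Punc c s" using False by (cases e) auto
        have "c < n" using D[OF e] cs by simp
        moreover have "s = t0"
        proof (cases "c = 0")
          case True
          then show ?thesis using NC[OF e u1] cs u1t by auto
        next
          case False
          then show ?thesis using NC[OF e t0] cs by auto
        qed
        ultimately show "e \<in> {Punc c t0 | c. c < n}" using cs by blast
      qed
    next
      show "{Punc c t0 | c. c < n} \<subseteq> \<Delta>"
      proof
        fix e assume "e \<in> {Punc c t0 | c. c < n}"
        then obtain c where c: "e = Punc c t0" "c < n" by blast
        obtain u where u: "Punc c u \<in> \<Delta>" using allP[OF c(2)] by blast
        show "e \<in> \<Delta>"
        proof (cases "c = 0")
          case True then show ?thesis using c t0 by simp
        next
          case False
          then have "u = t0" using NC[OF u t0] by auto
          then show ?thesis using u c by simp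
        qed
      qed
    qed
    show False
    proof (cases t0)
      case True then show False using eq assms(4) unfolding S_inv_def by simp
    next
      case False then show False using eq assms(3) unfolding S_def by simp
    qed
  qed
qed

end
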